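(* For all $n\ge0$ and $u^n\in\mathbb S$, the intermediate iterate $\hat u^{n+1}$ satisfies $$\|\hat u^{n+1}\|_{L^2}-\|u^n\|_{L^2}=\frac{(u^n-u^{n+1},u^n)_{L^2}}{(u^{n+1},u^n)_{L^2}}\ge0,$$ and $\|\hat u^{n+1}\|_{L^2}=\|u^n\|_{L^2}$ if and only if $u^n=\hat u^{n+1}$.
   Context: Let $\mathcal D\subset\mathbb R^d$, $d\in\{2,3\}$, be a bounded convex domain, $V\in L^\infty(\mathcal D;\mathbb R_{\ge0})$, $\beta\ge0$, $\Omega\in\mathbb R$, with $K>0$ such that $V(x)-\frac{1+K}{4}\Omega^2(x_1^2+x_2^2)\ge0$ a.e. $L^2(\mathcal D;\mathbb C)$, $H^1_0(\mathcal D;\mathbb C)$ are real Hilbert spaces with $(v,w)_{L^2}=\mathrm{Re}\int v\bar w$; $\langle\cdot,\cdot\rangle$ is the $H^{-1}$--$H^1_0$ pairing; $\mathbb S=\{v\in H^1_0:\|v\|_{L^2}=1\}$. With $\mathcal L_3=-\mathrm{i}(x_1\partial_{x_2}-x_2\partial_{x_1})$, for $z\in H^1_0$ let $\langle\mathcal A_{|z|}v,w\rangle=(\nabla v,\nabla w)_{L^2}+(Vv,w)_{L^2}-\Omega(\mathcal L_3v,w)_{L^2}+\beta(|z|^2v,w)_{L^2}$, and for $f\in L^2$ let $\mathcal A_{|z|}^{-1}\mathcal If$ be the unique $q\in H^1_0$ with $\langle\mathcal A_{|z|}q,w\rangle=(f,w)_{L^2}$ for all $w\in H^1_0$. Energy-adaptive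 Riemannian gradient method with step sizes $\tau_n>0$: $\gamma^n=(u^n,\mathcal A_{|u^n|}^{-1}\mathcal Iu^n)_{L^2}^{-1}$, $\hat u^{n+1}=(1-\tau_n)u^n+\tau_n\gamma^n\mathcal A_{|u^n|}^{-1}\mathcal Iu^n$, $u^{n+1}=\hat u^{n+1}/\|\hat u^{n+1}\|_{L^2}$. *)

theory Defs
  imports "HOL-Analysis.Analysis"
begin

fun Ck :: "nat \<Rightarrow> ('a::euclidean_space \<Rightarrow> 'b::real_normed_vector) \<Rightarrow> bool" where
  "Ck 0 f = continuous_on UNIV f"
| "Ck (Suc k) f = (continuous_on UNIV f \<and> (\<forall>x. f differentiable (at x)) \<and>
      (\<forall>b\<in>Basis. Ck k (\<lambda>x. frechet_derivative f (at x) b)))"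

definition smooth_fun :: "('a::euclidean_space \<Rightarrow> 'b::real_normed_vector) \<Rightarrow> bool" where
  "smooth_fun f \<longleftrightarrow> (\<forall>k. Ck k f)"

definition test_fun :: "'a::euclidean_space set \<Rightarrow> ('a \<Rightarrow> complex) \<Rightarrow> bool" where
  "test_fun D \<phi> \<longleftrightarrow> smooth_fun \<phi> \<and> compact (closure {x. \<phi> x \<noteq> 0})
                        \<and> closure {x. \<phi> x \<noteq> 0} \<subseteq> D"

definition cpd :: "('a::euclidean_space \<Rightarrow> complex) \<Rightarrow> 'a \<Rightarrow> 'a \<Rightarrow> complex" where
  "cpd \<phi> b x = frechet_derivative \<phi> (at x) b"

text \<open>Membership in \<open>L^2(D;\<complex>)\<close> (functions are identified a.e. on D).\<close>
definition in_L2 :: "'a::euclidean_space set \<Rightarrow> ('a \<Rightarrow> complex) \<Rightarrow> bool" where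
  "in_L2 D v \<longleftrightarrow> set_borel_measurable lebesgue D v
                 \<and> set_integrable lebesgue D (\<lambda>x. (cmod (v x))\<^sup>2)"

definition l2_inner :: "'a::euclidean_space set \<Rightarrow> ('a \<Rightarrow> complex) \<Rightarrow> ('a \<Rightarrow> complex) \<Rightarrow> real" where
  "l2_inner D v w = Re (LINT x:D|lebesgue. v x * cnj (w x))"

definition l2_norm :: "'a::euclidean_space set \<Rightarrow> ('a \<Rightarrow> complex) \<Rightarrow> real" where
  "l2_norm D v = sqrt (LINT x:D|lebesgue. (cmod (v x))\<^sup>2)"

definition has_weak_pd :: "'a::euclidean_space set \<Rightarrow> ('a \<Rightarrow> complex) \<Rightarrow> 'a \<Rightarrow> ('a \<Rightarrow> complex) \<Rightarrow> bool" where
  "has_weak_pd D v b g \<longleftrightarrow> in_L2 D g \<and>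
     (\<forall>\<phi>. test_fun D \<phi> \<longrightarrow>
        (LINT x:D|lebesgue. v x * cpd \<phi> b x) = - (LINT x:D|lebesgue. g x * \<phi> x))"

definition wpd :: "'a::euclidean_space set \<Rightarrow> ('a \<Rightarrow> complex) \<Rightarrow> 'a \<Rightarrow> ('a \<Rightarrow> complex)" where
  "wpd D v b = (SOME g. has_weak_pd D v b g)"

definition in_H10 :: "'a::euclidean_space set \<Rightarrow> ('a \<Rightarrow> complex) \<Rightarrow> bool" where
  "in_H10 D v \<longleftrightarrow> in_L2 D v \<and> (\<forall>b\<in>Basis. \<exists>g. has_weak_pd D v b g) \<and>
     (\<exists>\<phi>s. (\<forall>k. test_fun D (\<phi>s k)) \<and>
        (\<lambda>k. l2_norm D (\<lambda>x. \<phi>s k x - v x)) \<longlonglongrightarrow> 0 \<and>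
        (\<forall>b\<in>Basis. (\<lambda>k. l2_norm D (\<lambda>x. cpd (\<phi>s k) b x - wpd D v b x)) \<longlonglongrightarrow> 0))"

definition L3 :: "'a::euclidean_space set \<Rightarrow> 'a \<Rightarrow> 'a \<Rightarrow> ('a \<Rightarrow> complex) \<Rightarrow> ('a \<Rightarrow> complex)" where
  "L3 D e1 e2 v = (\<lambda>x. - \<i> * (complex_of_real (x \<bullet> e1) * wpd D v e2 x
                               - complex_of_real (x \<bullet> e2) * wpd D v e1 x))"

definition A_form :: "'a::euclidean_space set \<Rightarrow> 'a \<Rightarrow> 'a \<Rightarrow> ('a \<Rightarrow> real) \<Rightarrow> real \<Rightarrow> real
                     \<Rightarrow> ('a \<Rightarrow> complex) \<Rightarrow> ('a \<Rightarrow> complex) \<Rightarrow> ('a \<Rightarrow> complex) \<Rightarrow> real" where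
  "A_form D e1 e2 V \<beta> \<Omega> z v w =
     (\<Sum>b\<in>Basis. l2_inner D (wpd D v b) (wpd D w b))
     + l2_inner D (\<lambda>x. complex_of_real (V x) * v x) w
     - \<Omega> * l2_inner D (L3 D e1 e2 v) w
     + \<beta> * l2_inner D (\<lambda>x. complex_of_real ((cmod (z x))\<^sup>2) * v x) w"

end

theory Submission
  imports Defs
begin

lemma D_sets: assumes "open D" shows "(D::'a::euclidean_space set) \<in> sets lebesgue"
  using assms by (simp add: borel_open)

lemma fin_D: assumes "open D" "bounded D" shows "finite_measure (lebesgue_on (D::'a::euclidean_space set))"
proof -
  have "D \<in> lmeasurable" using assms lmeasurable_open by blast
  then show ?thesis
    by (intro finite_measureI) (simp add: emeasure_restrict_space assms D_sets fmeasurable_def)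
qed

lemma LINT_on: assumes "D \<in> sets lebesgue"
  shows "(LINT x:D|lebesgue. f x) = integral\<^sup>L (lebesgue_on D) (f::_ \<Rightarrow> 'b::{banach, second_countable_topology})"
  using assms by (simp add: set_lebesgue_integral_def integral_restrict_space)

lemma sint_on: assumes "D \<in> sets lebesgue"
  shows "set_integrable lebesgue D (f::_ \<Rightarrow> 'b::{banach, second_countable_topology}) = integrable (lebesgue_on D) f"
  using assms by (simp add: set_integrable_eq)

lemma smeas_on: assumes "D \<in> sets lebesgue"
  shows "set_borel_measurable lebesgue D (f::_ \<Rightarrow> 'b::real_normed_vector) = (f \<in> borel_measurable (lebesgue_on D))"
  using assms by (simp add: set_borel_measurable_def borel_measurable_restrict_space_iff)

lemma AE_on: assumes "D \<in> sets lebesgue"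
  shows "(AE x in lebesgue. x \<in> D \<longrightarrow> P x) = (AE x in lebesgue_on D. P x)"
  using assms by (simp add: AE_restrict_space_iff)

definition L2 :: "'a measure \<Rightarrow> ('a \<Rightarrow> complex) \<Rightarrow> bool" where
  "L2 M v \<longleftrightarrow> v \<in> borel_measurable M \<and> integrable M (\<lambda>x. (cmod (v x))\<^sup>2)"

lemma borel_measurable_cnj[measurable]:
  "f \<in> borel_measurable M \<Longrightarrow> (\<lambda>x. cnj (f x)) \<in> borel_measurable M"
  by (rule borel_measurable_continuous_on[of cnj]) (auto intro: continuous_on_cnj continuous_on_id)

lemma L2_meas: "L2 M v \<Longrightarrow> v \<in> borel_measurable M" by (simp add: L2_def)
lemma L2_int: "L2 M v \<Longrightarrow> integrable M (\<lambda>x. (cmod (v x))\<^sup>2)" by (simp add: L2_def)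

lemma L2_prod_int:
  assumes "L2 M v" "L2 M w"
  shows "integrable M (\<lambda>x. cmod (v x) * cmod (w x))"
proof (rule Bochner_Integration.integrable_bound[of _ "\<lambda>x. ((cmod (v x))\<^sup>2 + (cmod (w x))\<^sup>2)"])
  show "integrable M (\<lambda>x. ((cmod (v x))\<^sup>2 + (cmod (w x))\<^sup>2))"
    using assms by (auto simp: L2_def)
  show "(\<lambda>x. cmod (v x) * cmod (w x)) \<in> borel_measurable M"
    using assms by (auto simp: L2_def)
  show "AE x in M. norm (cmod (v x) * cmod (w x)) \<le> norm ((cmod (v x))\<^sup>2 + (cmod (w x))\<^sup>2)"
  proof (intro AE_I2)
    fix x
    have "2 * (cmod (v x) * cmod (w x)) \<le> (cmod (v x))\<^sup>2 + (cmod (w x))\<^sup>2"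
      using sum_squares_bound[of "cmod (v x)" "cmod (w x)"] by simp
    moreover have "0 \<le> cmod (v x) * cmod (w x)" by simp
    moreover have "norm (cmod (v x) * cmod (w x)) = cmod (v x) * cmod (w x)" by simp
    moreover have "norm ((cmod (v x))\<^sup>2 + (cmod (w x))\<^sup>2) = (cmod (v x))\<^sup>2 + (cmod (w x))\<^sup>2" by simp
    ultimately show "norm (cmod (v x) * cmod (w x)) \<le> norm ((cmod (v x))\<^sup>2 + (cmod (w x))\<^sup>2)"
      by linarith
  qed
qed

lemma L2_prod_int_c:
  assumes "L2 M v" "L2 M w"
  shows "integrable M (\<lambda>x. v x * cnj (w x))"
proof (rule Bochner_Integration.integrable_bound[OF L2_prod_int[OF assms]])
  have [measurable]: "v \<in> borel_measurable M" "w \<in> borel_measurable M" using assms by (auto simp: L2_def)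
  show "(\<lambda>x. v x * cnj (w x)) \<in> borel_measurable M" by measurable
qed (auto simp: norm_mult)

lemma L2_add:
  assumes "L2 M v" "L2 M w" shows "L2 M (\<lambda>x. v x + w x)"
  unfolding L2_def
proof
  show "(\<lambda>x. v x + w x) \<in> borel_measurable M" using assms by (auto simp: L2_def)
  show "integrable M (\<lambda>x. (cmod (v x + w x))\<^sup>2)"
  proof (rule Bochner_Integration.integrable_bound[of _ "\<lambda>x. 2 * ((cmod (v x))\<^sup>2 + (cmod (w x))\<^sup>2)"])
    show "integrable M (\<lambda>x. 2 * ((cmod (v x))\<^sup>2 + (cmod (w x))\<^sup>2))"
      using assms by (auto simp: L2_def)
    show "(\<lambda>x. (cmod (v x + w x))\<^sup>2) \<in> borel_measurable M"
      using assms by (auto simp: L2_def)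
    show "AE x in M. norm ((cmod (v x + w x))\<^sup>2) \<le> norm (2 * ((cmod (v x))\<^sup>2 + (cmod (w x))\<^sup>2))"
    proof (intro AE_I2)
      fix x
      have t: "cmod (v x + w x) \<le> cmod (v x) + cmod (w x)" by (rule norm_triangle_ineq)
      have "(cmod (v x + w x))\<^sup>2 \<le> (cmod (v x) + cmod (w x))\<^sup>2"
        using t by (intro power_mono) auto
      also have "\<dots> \<le> 2 * ((cmod (v x))\<^sup>2 + (cmod (w x))\<^sup>2)"
        using sum_squares_bound[of "cmod (v x)" "cmod (w x)"] by (simp add: power2_sum)
      finally show "norm ((cmod (v x + w x))\<^sup>2) \<le> norm (2 * ((cmod (v x))\<^sup>2 + (cmod (w x))\<^sup>2))"
        by simp
    qed
  qed
qed

lemma L2_cmult: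
  assumes "L2 M v" shows "L2 M (\<lambda>x. c * v x)"
  using assms by (auto simp: L2_def norm_mult power_mult_distrib)

lemma L2_diff:
  assumes "L2 M v" "L2 M w" shows "L2 M (\<lambda>x. v x - w x)"
  using L2_add[OF assms(1) L2_cmult[OF assms(2), of "-1"]] by simp

lemma L2_bounded:
  assumes "finite_measure M" "v \<in> borel_measurable M" "\<And>x. x \<in> space M \<Longrightarrow> cmod (v x) \<le> B"
  shows "L2 M v"
  unfolding L2_def
proof
  show "v \<in> borel_measurable M" by fact
  show "integrable M (\<lambda>x. (cmod (v x))\<^sup>2)"
  proof (rule Bochner_Integration.integrable_bound[of _ "\<lambda>x. B\<^sup>2"])
    show "integrable M (\<lambda>x. B\<^sup>2)" using assms(1) finite_measure.integrable_const by blast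
    show "(\<lambda>x. (cmod (v x))\<^sup>2) \<in> borel_measurable M" using assms by auto
    show "AE x in M. norm ((cmod (v x))\<^sup>2) \<le> norm (B\<^sup>2)"
      using assms(3) by (intro AE_I2) (auto intro!: power_mono)
  qed
qed

lemma CS_real:
  fixes f g :: "_ \<Rightarrow> real"
  assumes fm: "f \<in> borel_measurable M" and gm: "g \<in> borel_measurable M"
    and f0: "\<And>x. 0 \<le> f x" and g0: "\<And>x. 0 \<le> g x"
    and fi: "integrable M (\<lambda>x. (f x)\<^sup>2)" and gi: "integrable M (\<lambda>x. (g x)\<^sup>2)"
  shows "(\<integral>x. f x * g x \<partial>M) \<le> sqrt (\<integral>x. (f x)\<^sup>2 \<partial>M) * sqrt (\<integral>x. (g x)\<^sup>2 \<partial>M)"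
proof -
  define A where "A = (\<integral>x. (f x)\<^sup>2 \<partial>M)"
  define B where "B = (\<integral>x. (g x)\<^sup>2 \<partial>M)"
  have A0: "0 \<le> A" unfolding A_def by (intro integral_nonneg_AE) auto
  have B0: "0 \<le> B" unfolding B_def by (intro integral_nonneg_AE) auto
  show ?thesis
  proof (cases "A = 0 \<or> B = 0")
    case True
    then show ?thesis
    proof
      assume "A = 0"
      then have "AE x in M. (f x)\<^sup>2 = 0" unfolding A_def
        using integral_nonneg_eq_0_iff_AE[OF fi] by auto
      then have "AE x in M. f x * g x = 0" by auto
      then have "(\<integral>x. f x * g x \<partial>M) = 0" by (rule integral_eq_zero_AE)
      then show ?thesis using A0 B0 by (simp add: A_def[symmetric] B_def[symmetric])
    next
      assume "B = 0"
      then have "AE x in M. (g x)\<^sup>2 = 0" unfolding B_def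
        using integral_nonneg_eq_0_iff_AE[OF gi] by auto
      then have "AE x in M. f x * g x = 0" by auto
      then have "(\<integral>x. f x * g x \<partial>M) = 0" by (rule integral_eq_zero_AE)
      then show ?thesis using A0 B0 by (simp add: A_def[symmetric] B_def[symmetric])
    qed
  next
    case False
    define a where "a = sqrt A"
    define b where "b = sqrt B"
    have a0: "a > 0" using False A0 by (simp add: a_def)
    have b0: "b > 0" using False B0 by (simp add: b_def)
    have aa: "a * a = A" using A0 by (simp add: a_def)
    have bb: "b * b = B" using B0 by (simp add: b_def)
    have pt: "f x * g x \<le> (b / a * (f x)\<^sup>2 + a / b * (g x)\<^sup>2) / 2" for x
    proof -
      have "0 \<le> (b * f x - a * g x)\<^sup>2" by simp
      then have "2 * (a * b) * (f x * g x) \<le> b * b * (f x)\<^sup>2 + a * a * (g x)\<^sup>2"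
        by (simp add: power2_eq_square algebra_simps)
      then have "f x * g x \<le> (b * b * (f x)\<^sup>2 + a * a * (g x)\<^sup>2) / (2 * (a * b))"
        using a0 b0 by (simp add: field_simps)
      also have "\<dots> = (b / a * (f x)\<^sup>2 + a / b * (g x)\<^sup>2) / 2"
        using a0 b0 by (simp add: field_simps power2_eq_square)
      finally show ?thesis .
    qed
    have "(\<integral>x. f x * g x \<partial>M) \<le> (\<integral>x. (b / a * (f x)\<^sup>2 + a / b * (g x)\<^sup>2) / 2 \<partial>M)"
      using pt fi gi f0 g0 a0 b0
      by (intro integral_mono') (auto intro!: add_nonneg_nonneg mult_nonneg_nonneg divide_nonneg_nonneg)
    also have "\<dots> = (b / a * A + a / b * B) / 2"
      using fi gi by (simp add: A_def B_def)
    also have "\<dots> = a * b"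
      using a0 b0 aa[symmetric] bb[symmetric] by (simp add: field_simps)
    finally show ?thesis by (simp add: a_def b_def A_def B_def)
  qed
qed

lemma CS_L2:
  assumes "L2 M v" "L2 M w"
  shows "(\<integral>x. cmod (v x) * cmod (w x) \<partial>M) \<le> sqrt (\<integral>x. (cmod (v x))\<^sup>2 \<partial>M) * sqrt (\<integral>x. (cmod (w x))\<^sup>2 \<partial>M)"
  using assms by (intro CS_real) (auto simp: L2_def)

lemma fd_works: "f differentiable (at x) \<Longrightarrow> (f has_derivative frechet_derivative f (at x)) (at x)"
  using frechet_derivative_works by blast

lemma Ck_Suc_imp: "Ck (Suc k) f \<Longrightarrow> Ck k f"
proof (induction k arbitrary: f)
  case 0 then show ?case by simp
next
  case (Suc k) then show ?case by auto
qed

lemma Ck_imp_cont: "Ck k f \<Longrightarrow> continuous_on UNIV f"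
  by (cases k) auto

lemma Ck_const: "Ck k (\<lambda>x::'a::euclidean_space. c::'b::real_normed_vector)"
proof (induction k arbitrary: c)
  case 0 then show ?case by simp
next
  case (Suc k)
  have d: "frechet_derivative (\<lambda>x::'a. c) (at x) = (\<lambda>h. 0)" for x
    by (rule frechet_derivative_at[symmetric]) (rule has_derivative_const)
  show ?case using Suc by (simp add: d)
qed

lemma Ck_add: "Ck k f \<Longrightarrow> Ck k g \<Longrightarrow> Ck k (\<lambda>x::'a::euclidean_space. (f x + g x :: 'b::real_normed_vector))"
proof (induction k arbitrary: f g)
  case 0 then show ?case by (auto intro: continuous_on_add)
next
  case (Suc k)
  have df: "\<And>x. f differentiable (at x)" and dg: "\<And>x. g differentiable (at x)" using Suc.prems by auto
  have d: "frechet_derivative (\<lambda>x. f x + g x) (at x) = (\<lambda>h. frechet_derivative f (at x) h + frechet_derivative g (at x) h)" for x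
    by (rule frechet_derivative_at[symmetric]) (intro has_derivative_add fd_works df dg)
  show ?case using Suc by (auto simp: d intro: continuous_on_add differentiable_add)
qed

lemma Ck_mult: "Ck k f \<Longrightarrow> Ck k g \<Longrightarrow> Ck k (\<lambda>x::'a::euclidean_space. (f x * g x :: complex))"
proof (induction k arbitrary: f g)
  case 0 then show ?case by (auto intro: continuous_on_mult)
next
  case (Suc k)
  have df: "\<And>x. f differentiable (at x)" and dg: "\<And>x. g differentiable (at x)" using Suc.prems by auto
  have d: "frechet_derivative (\<lambda>x. f x * g x) (at x) = (\<lambda>h. f x * frechet_derivative g (at x) h + frechet_derivative f (at x) h * g x)" for x
    by (rule frechet_derivative_at[symmetric]) (intro has_derivative_mult fd_works df dg)
  have fk: "Ck k f" and gk: "Ck k g" using Suc.prems Ck_Suc_imp by blast+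
  show ?case
  proof (simp only: Ck.simps, intro conjI ballI allI)
    show "continuous_on UNIV (\<lambda>x. f x * g x)" using Suc.prems by (auto intro: continuous_on_mult)
    show "(\<lambda>x. f x * g x) differentiable at x" for x using df dg by (intro differentiable_mult)
    fix b :: 'a assume b: "b \<in> Basis"
    have "Ck k (\<lambda>x. f x * frechet_derivative g (at x) b + frechet_derivative f (at x) b * g x)"
      using Suc.prems b by (intro Ck_add Suc.IH fk gk) auto
    then show "Ck k (\<lambda>x. frechet_derivative (\<lambda>x. f x * g x) (at x) b)" by (simp add: d)
  qed
qed

lemma Ck_cnj: "Ck k f \<Longrightarrow> Ck k (\<lambda>x::'a::euclidean_space. cnj (f x))"
proof (induction k arbitrary: f)
  case 0 then show ?case by (auto intro: continuous_on_cnj)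
next
  case (Suc k)
  have df: "\<And>x. f differentiable (at x)" using Suc.prems by auto
  have d: "frechet_derivative (\<lambda>x. cnj (f x)) (at x) = (\<lambda>h. cnj (frechet_derivative f (at x) h))" for x
    by (rule frechet_derivative_at[symmetric]) (intro has_derivative_cnj fd_works df)
  show ?case using Suc by (auto simp: d simp: differentiable_cnj_iff intro: continuous_on_cnj)
qed

lemma Ck_lin: "Ck k (\<lambda>x::'a::euclidean_space. complex_of_real (x \<bullet> e))"
proof (cases k)
  case 0 then show ?thesis by (auto intro!: continuous_intros)
next
  case (Suc m)
  have hd: "((\<lambda>x::'a. complex_of_real (x \<bullet> e)) has_derivative (\<lambda>h. complex_of_real (h \<bullet> e))) (at x)" for x
    by (intro derivative_eq_intros) auto
  have d: "frechet_derivative (\<lambda>x::'a. complex_of_real (x \<bullet> e)) (at x) = (\<lambda>h. complex_of_real (h \<bullet> e))" for x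
    using frechet_derivative_at[OF hd] by simp
  show ?thesis using Suc hd by (auto simp: d Ck_const differentiable_def intro!: continuous_intros)
qed

lemma cont_bdd_on:
  fixes f :: "'a::euclidean_space \<Rightarrow> 'b::real_normed_vector"
  assumes "continuous_on UNIV f" "bounded D"
  shows "\<exists>B. \<forall>x\<in>D. norm (f x) \<le> B"
proof -
  have "compact (f ` closure D)"
    using assms by (intro compact_continuous_image) (auto intro: continuous_on_subset)
  then have "bounded (f ` closure D)" by (rule compact_imp_bounded)
  then obtain B where "\<forall>y\<in>f ` closure D. norm y \<le> B" by (auto simp: bounded_iff)
  then show ?thesis using closure_subset by blast
qed

lemma cont_L2:
  fixes f :: "'a::euclidean_space \<Rightarrow> complex"
  assumes "continuous_on UNIV f" "bounded D" "open D"
  shows "L2 (lebesgue_on D) f"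
proof -
  obtain B where B: "\<forall>x\<in>D. cmod (f x) \<le> B" using cont_bdd_on[OF assms(1,2)] by blast
  show ?thesis
  proof (rule L2_bounded)
    show "finite_measure (lebesgue_on D)" using fin_D assms by blast
    show "f \<in> borel_measurable (lebesgue_on D)"
      using assms by (intro continuous_imp_measurable_on_sets_lebesgue D_sets) (auto intro: continuous_on_subset)
    show "\<And>x. x \<in> space (lebesgue_on D) \<Longrightarrow> cmod (f x) \<le> B" using B by simp
  qed
qed

lemma test_smooth_Ck: "test_fun D \<phi> \<Longrightarrow> Ck k \<phi>"
  by (simp add: test_fun_def smooth_fun_def)

lemma test_psi:
  fixes \<phi> :: "'a::euclidean_space \<Rightarrow> complex"
  assumes "test_fun D \<phi>"
  shows "test_fun D (\<lambda>x. complex_of_real (x \<bullet> e) * cnj (\<phi> x))"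
proof -
  have sub: "{x. complex_of_real (x \<bullet> e) * cnj (\<phi> x) \<noteq> 0} \<subseteq> {x. \<phi> x \<noteq> 0}" by auto
  then have cs: "closure {x. complex_of_real (x \<bullet> e) * cnj (\<phi> x) \<noteq> 0} \<subseteq> closure {x. \<phi> x \<noteq> 0}"
    by (rule closure_mono)
  have "compact (closure {x. \<phi> x \<noteq> 0})" using assms by (simp add: test_fun_def)
  then have "compact (closure {x. complex_of_real (x \<bullet> e) * cnj (\<phi> x) \<noteq> 0})"
    using compact_Int_closed[OF _ closed_closure, of "closure {x. \<phi> x \<noteq> 0}" "{x. complex_of_real (x \<bullet> e) * cnj (\<phi> x) \<noteq> 0}"] cs
    by (simp add: Int_absorb1)
  moreover have "smooth_fun (\<lambda>x. complex_of_real (x \<bullet> e) * cnj (\<phi> x))"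
    unfolding smooth_fun_def using assms
    by (intro allI Ck_mult Ck_lin Ck_cnj test_smooth_Ck[OF assms])
  ultimately show ?thesis using assms cs unfolding test_fun_def by blast
qed

lemma test_diff: "test_fun D \<phi> \<Longrightarrow> \<phi> differentiable (at x)"
  using test_smooth_Ck[of D \<phi> 1] by simp

lemma test_cpd_cont: "test_fun D \<phi> \<Longrightarrow> b \<in> Basis \<Longrightarrow> continuous_on UNIV (\<lambda>x. cpd \<phi> b x)"
  using test_smooth_Ck[of D \<phi> 1] unfolding cpd_def by auto

lemma cpd_psi:
  fixes \<phi> :: "'a::euclidean_space \<Rightarrow> complex"
  assumes "test_fun D \<phi>" "e \<in> Basis"
  shows "cpd (\<lambda>x. complex_of_real (x \<bullet> e) * cnj (\<phi> x)) e x
         = cnj (complex_of_real (x \<bullet> e) * cpd \<phi> e x + \<phi> x)"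
proof -
  have hd: "((\<lambda>x. complex_of_real (x \<bullet> e) * cnj (\<phi> x)) has_derivative
     (\<lambda>h. complex_of_real (x \<bullet> e) * cnj (frechet_derivative \<phi> (at x) h) + complex_of_real (h \<bullet> e) * cnj (\<phi> x))) (at x)"
    by (intro has_derivative_mult has_derivative_cnj fd_works test_diff[OF assms(1)] derivative_eq_intros) auto
  show ?thesis
    unfolding cpd_def frechet_derivative_at[OF hd, symmetric] using assms(2) by simp
qed

lemma H10_L2: "open D \<Longrightarrow> in_H10 D v \<Longrightarrow> L2 (lebesgue_on D) v"
  by (simp add: in_H10_def in_L2_def L2_def smeas_on sint_on D_sets)

lemma H10_wpd: "in_H10 D v \<Longrightarrow> b \<in> Basis \<Longrightarrow> has_weak_pd D v b (wpd D v b)"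
proof -
  assume "in_H10 D v" "b \<in> Basis"
  then have "Ex (has_weak_pd D v b)" unfolding in_H10_def by blast
  then show ?thesis unfolding wpd_def by (rule someI_ex)
qed

lemma H10_wpd_L2: "open D \<Longrightarrow> in_H10 D v \<Longrightarrow> b \<in> Basis \<Longrightarrow> L2 (lebesgue_on D) (wpd D v b)"
  using H10_wpd[of D v b] by (simp add: has_weak_pd_def in_L2_def L2_def smeas_on sint_on D_sets)

lemma l2n_on: "open D \<Longrightarrow> l2_norm D v = sqrt (\<integral>x. (cmod (v x))\<^sup>2 \<partial>lebesgue_on D)"
  by (simp add: l2_norm_def LINT_on D_sets)

lemma l2i_on: "open D \<Longrightarrow> l2_inner D v w = Re (\<integral>x. v x * cnj (w x) \<partial>lebesgue_on D)"
  by (simp add: l2_inner_def LINT_on D_sets)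

lemma sq_int: "(\<integral>x. v x * cnj (v x) \<partial>M) = complex_of_real (\<integral>x. (cmod (v x))\<^sup>2 \<partial>M)"
  by (simp only: complex_norm_square[symmetric] integral_complex_of_real)

lemma poinc:
  fixes D :: "'a::euclidean_space set" and q :: "'a \<Rightarrow> complex"
  assumes oD: "open D" and bD: "bounded D" and e: "e \<in> Basis" and qH: "in_H10 D q"
    and g0: "AE x in lebesgue_on D. wpd D q e x = 0"
  shows "AE x in lebesgue_on D. q x = 0"
proof -
  define M where "M = lebesgue_on D"
  have Dm: "D \<in> sets lebesgue" using oD by (rule D_sets)
  have qL: "L2 M q" unfolding M_def using H10_L2[OF oD qH] .
  have gL: "L2 M (wpd D q e)" unfolding M_def using H10_wpd_L2[OF oD qH e] .
  have wk: "has_weak_pd D q e (wpd D q e)" using H10_wpd[OF qH e] .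
  obtain \<phi>s where tf: "\<And>k. test_fun D (\<phi>s k)"
    and c1: "(\<lambda>k. l2_norm D (\<lambda>x. \<phi>s k x - q x)) \<longlonglongrightarrow> 0"
    and c2: "(\<lambda>k. l2_norm D (\<lambda>x. cpd (\<phi>s k) e x - wpd D q e x)) \<longlonglongrightarrow> 0"
    using qH e unfolding in_H10_def by blast
  obtain R where R0: "R > 0" and R: "\<And>x. x \<in> D \<Longrightarrow> norm x \<le> R"
    using bD by (auto simp: bounded_pos)
  define nq where "nq = sqrt (\<integral>x. (cmod (q x))\<^sup>2 \<partial>M)"
  have nq0: "0 \<le> nq" unfolding nq_def by (intro real_sqrt_ge_zero integral_nonneg_AE) auto
  have key: "(\<integral>x. (cmod (q x))\<^sup>2 \<partial>M) \<le>
      nq * (R * l2_norm D (\<lambda>x. cpd (\<phi>s k) e x - wpd D q e x) + l2_norm D (\<lambda>x. \<phi>s k x - q x))" for k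
  proof -
    define \<phi> where "\<phi> = \<phi>s k"
    have t\<phi>: "test_fun D \<phi>" unfolding \<phi>_def by (rule tf)
    define d where "d = (\<lambda>x. cpd \<phi> e x)"
    define w where "w = (\<lambda>x. complex_of_real (x \<bullet> e) * d x)"
    have \<phi>c: "continuous_on UNIV \<phi>" using test_smooth_Ck[OF t\<phi>, of 0] by simp
    have dc: "continuous_on UNIV d" unfolding d_def using test_cpd_cont[OF t\<phi> e] .
    have wc: "continuous_on UNIV w" unfolding w_def using dc by (intro continuous_intros)
    have \<phi>L: "L2 M \<phi>" unfolding M_def using cont_L2[OF \<phi>c bD oD] .
    have dL: "L2 M d" unfolding M_def using cont_L2[OF dc bD oD] .
    have wL: "L2 M w" unfolding M_def using cont_L2[OF wc bD oD] .
    have "(LINT x:D|lebesgue. q x * cpd (\<lambda>x. complex_of_real (x \<bullet> e) * cnj (\<phi> x)) e x)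
        = - (LINT x:D|lebesgue. wpd D q e x * (complex_of_real (x \<bullet> e) * cnj (\<phi> x)))"
      using wk test_psi[OF t\<phi>, of e] unfolding has_weak_pd_def by blast
    also have "(LINT x:D|lebesgue. wpd D q e x * (complex_of_real (x \<bullet> e) * cnj (\<phi> x))) = 0"
      unfolding LINT_on[OF Dm] using g0 by (intro integral_eq_zero_AE) (auto elim!: AE_mp)
    finally have z: "(\<integral>x. q x * cnj (w x + \<phi> x) \<partial>M) = 0"
      unfolding LINT_on[OF Dm] M_def w_def d_def cpd_psi[OF t\<phi> e] by simp
    have i1: "integrable M (\<lambda>x. q x * cnj (w x + \<phi> x))" using qL wL \<phi>L by (intro L2_prod_int_c L2_add)
    have i2: "integrable M (\<lambda>x. q x * cnj (w x))" using qL wL by (intro L2_prod_int_c)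
    have i3: "integrable M (\<lambda>x. q x * cnj (\<phi> x - q x))" using qL \<phi>L by (intro L2_prod_int_c L2_diff)
    have "(\<integral>x. q x * cnj (q x) \<partial>M) = (\<integral>x. q x * cnj (w x + \<phi> x) - q x * cnj (w x) - q x * cnj (\<phi> x - q x) \<partial>M)"
      by (intro Bochner_Integration.integral_cong) (auto simp: algebra_simps)
    also have "\<dots> = (\<integral>x. q x * cnj (w x + \<phi> x) \<partial>M) - (\<integral>x. q x * cnj (w x) \<partial>M) - (\<integral>x. q x * cnj (\<phi> x - q x) \<partial>M)"
      using i1 i2 i3 by simp
    finally have e1: "(\<integral>x. q x * cnj (q x) \<partial>M) = - (\<integral>x. q x * cnj (w x) \<partial>M) - (\<integral>x. q x * cnj (\<phi> x - q x) \<partial>M)"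
      using z by simp
    have "(\<integral>x. (cmod (q x))\<^sup>2 \<partial>M) = Re (\<integral>x. q x * cnj (q x) \<partial>M)" by (simp add: sq_int)
    also have "\<dots> \<le> cmod (\<integral>x. q x * cnj (q x) \<partial>M)" by (rule complex_Re_le_cmod)
    also have "\<dots> \<le> cmod (\<integral>x. q x * cnj (w x) \<partial>M) + cmod (\<integral>x. q x * cnj (\<phi> x - q x) \<partial>M)"
      unfolding e1 using norm_triangle_ineq4[of "- (\<integral>x. q x * cnj (w x) \<partial>M)" "\<integral>x. q x * cnj (\<phi> x - q x) \<partial>M"]
      by (simp only: norm_minus_cancel)
    also have "\<dots> \<le> (\<integral>x. cmod (q x) * cmod (w x) \<partial>M) + (\<integral>x. cmod (q x) * cmod (\<phi> x - q x) \<partial>M)"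
      using integral_norm_bound[of M "\<lambda>x. q x * cnj (w x)"] integral_norm_bound[of M "\<lambda>x. q x * cnj (\<phi> x - q x)"]
      by (simp only: norm_mult complex_mod_cnj)
    also have "(\<integral>x. cmod (q x) * cmod (w x) \<partial>M) \<le> (\<integral>x. R * (cmod (q x) * cmod (d x)) \<partial>M)"
    proof (rule integral_mono)
      show "integrable M (\<lambda>x. cmod (q x) * cmod (w x))" using qL wL by (rule L2_prod_int)
      show "integrable M (\<lambda>x. R * (cmod (q x) * cmod (d x)))" using qL dL by (intro integrable_mult_right L2_prod_int)
      fix x assume "x \<in> space M"
      then have xD: "x \<in> D" by (simp add: M_def)
      have "\<bar>x \<bullet> e\<bar> \<le> norm x" using e by (metis Basis_le_norm)
      then have "\<bar>x \<bullet> e\<bar> \<le> R" using R[OF xD] by linarith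
      then have "cmod (w x) \<le> R * cmod (d x)" unfolding w_def by (simp add: norm_mult mult_right_mono)
      then show "cmod (q x) * cmod (w x) \<le> R * (cmod (q x) * cmod (d x))"
        by (metis mult.left_commute mult_left_mono norm_ge_zero)
    qed
    also have "(\<integral>x. R * (cmod (q x) * cmod (d x)) \<partial>M) = R * (\<integral>x. cmod (q x) * cmod (d x) \<partial>M)" by simp
    also have "(\<integral>x. cmod (q x) * cmod (d x) \<partial>M) \<le> nq * sqrt (\<integral>x. (cmod (d x))\<^sup>2 \<partial>M)"
      unfolding nq_def by (rule CS_L2[OF qL dL])
    also have "(\<integral>x. cmod (q x) * cmod (\<phi> x - q x) \<partial>M) \<le> nq * sqrt (\<integral>x. (cmod (\<phi> x - q x))\<^sup>2 \<partial>M)"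
      unfolding nq_def by (rule CS_L2[OF qL L2_diff[OF \<phi>L qL]])
    also have "(\<integral>x. (cmod (d x))\<^sup>2 \<partial>M) = (\<integral>x. (cmod (d x - wpd D q e x))\<^sup>2 \<partial>M)"
    proof (intro integral_cong_AE)
      have [measurable]: "d \<in> borel_measurable M" "wpd D q e \<in> borel_measurable M" using dL gL by (auto intro: L2_meas)
      show "(\<lambda>x. (cmod (d x))\<^sup>2) \<in> borel_measurable M" by measurable
      show "(\<lambda>x. (cmod (d x - wpd D q e x))\<^sup>2) \<in> borel_measurable M" by measurable
      show "AE x in M. (cmod (d x))\<^sup>2 = (cmod (d x - wpd D q e x))\<^sup>2"
        using g0 unfolding M_def[symmetric] by (auto elim!: AE_mp)
    qed
    finally show ?thesis
      unfolding l2n_on[OF oD] M_def[symmetric] d_def \<phi>_def using R0 nq0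
      by (simp add: algebra_simps mult_left_mono)
  qed
  have lim: "(\<lambda>k. nq * (R * l2_norm D (\<lambda>x. cpd (\<phi>s k) e x - wpd D q e x) + l2_norm D (\<lambda>x. \<phi>s k x - q x))) \<longlonglongrightarrow> nq * (R * 0 + 0)"
    by (intro tendsto_intros c1 c2)
  have le0: "(\<integral>x. (cmod (q x))\<^sup>2 \<partial>M) \<le> 0"
    using LIMSEQ_le_const[OF lim] key by simp
  have "(\<integral>x. (cmod (q x))\<^sup>2 \<partial>M) = 0"
    using le0 by (simp add: integral_nonneg_AE order_antisym)
  then have "AE x in M. (cmod (q x))\<^sup>2 = 0"
    using integral_nonneg_eq_0_iff_AE[OF L2_int[OF qL]] by simp
  then show ?thesis unfolding M_def by simp
qed

lemma amgm: fixes P Q s :: real assumes "s > 0" shows "P * Q \<le> s / 4 * P\<^sup>2 + Q\<^sup>2 / s"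
proof -
  have "0 \<le> (s * P / 2 - Q)\<^sup>2 / s" using assms by simp
  also have "(s * P / 2 - Q)\<^sup>2 / s = s / 4 * P\<^sup>2 + Q\<^sup>2 / s - P * Q"
    using assms by (simp add: power2_eq_square field_simps)
  finally show ?thesis by simp
qed

lemma pw_bound:
  fixes x1 x2 \<Omega> K V H :: real and a1 a2 qx :: complex
  assumes K: "K > 0" and V: "V \<ge> (1 + K) / 4 * \<Omega>\<^sup>2 * (x1\<^sup>2 + x2\<^sup>2)"
    and H: "H \<ge> (cmod a1)\<^sup>2 + (cmod a2)\<^sup>2"
  shows "\<bar>\<Omega>\<bar> * cmod (- \<i> * (complex_of_real x1 * a2 - complex_of_real x2 * a1)) * cmod qx
         \<le> V * (cmod qx)\<^sup>2 + H / (1 + K)"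
proof -
  define s where "s = 1 + K"
  have s0: "s > 0" using K by (simp add: s_def)
  have n: "cmod (- \<i> * (complex_of_real x1 * a2 - complex_of_real x2 * a1)) \<le> \<bar>x1\<bar> * cmod a2 + \<bar>x2\<bar> * cmod a1"
  proof -
    have "cmod (- \<i> * (complex_of_real x1 * a2 - complex_of_real x2 * a1)) = cmod (complex_of_real x1 * a2 - complex_of_real x2 * a1)"
      by (simp add: norm_mult)
    also have "\<dots> \<le> cmod (complex_of_real x1 * a2) + cmod (complex_of_real x2 * a1)" by (rule norm_triangle_ineq4)
    also have "\<dots> = \<bar>x1\<bar> * cmod a2 + \<bar>x2\<bar> * cmod a1" by (simp add: norm_mult)
    finally show ?thesis .
  qed
  have "\<bar>\<Omega>\<bar> * cmod (- \<i> * (complex_of_real x1 * a2 - complex_of_real x2 * a1)) * cmod qx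
        \<le> \<bar>\<Omega>\<bar> * (\<bar>x1\<bar> * cmod a2 + \<bar>x2\<bar> * cmod a1) * cmod qx"
    using n by (intro mult_right_mono mult_left_mono) auto
  also have "\<dots> = (\<bar>\<Omega>\<bar> * cmod qx * \<bar>x1\<bar>) * cmod a2 + (\<bar>\<Omega>\<bar> * cmod qx * \<bar>x2\<bar>) * cmod a1"
    by (simp add: algebra_simps)
  also have "\<dots> \<le> (s / 4 * (\<bar>\<Omega>\<bar> * cmod qx * \<bar>x1\<bar>)\<^sup>2 + (cmod a2)\<^sup>2 / s) + (s / 4 * (\<bar>\<Omega>\<bar> * cmod qx * \<bar>x2\<bar>)\<^sup>2 + (cmod a1)\<^sup>2 / s)"
    using amgm[OF s0] by (intro add_mono) auto
  also have "\<dots> = s / 4 * \<Omega>\<^sup>2 * (x1\<^sup>2 + x2\<^sup>2) * (cmod qx)\<^sup>2 + ((cmod a1)\<^sup>2 + (cmod a2)\<^sup>2) / s"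
  proof -
    have "((cmod a1)\<^sup>2 + (cmod a2)\<^sup>2) / s = (cmod a2)\<^sup>2 / s + (cmod a1)\<^sup>2 / s"
      by (simp add: add_divide_distrib)
    then show ?thesis by (simp add: power_mult_distrib algebra_simps)
  qed
  also have "\<dots> \<le> V * (cmod qx)\<^sup>2 + H / s"
    using V H s0 unfolding s_def[symmetric] by (intro add_mono mult_right_mono divide_right_mono) auto
  finally show ?thesis by (simp add: s_def)
qed

lemma key_nonzero:
  fixes D :: "'a::euclidean_space set" and V :: "'a \<Rightarrow> real" and \<beta> \<Omega> K :: real
    and e1 e2 :: 'a and u q :: "'a \<Rightarrow> complex"
  assumes e12: "e1 \<in> Basis" "e2 \<in> Basis" "e1 \<noteq> e2"
    and oD: "open D" and bD: "bounded D"
    and V_meas: "set_borel_measurable lebesgue D V"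
    and V_bdd: "\<exists>M. AE x in lebesgue. x \<in> D \<longrightarrow> \<bar>V x\<bar> \<le> M"
    and V_nonneg: "AE x in lebesgue. x \<in> D \<longrightarrow> V x \<ge> 0"
    and \<beta>: "\<beta> \<ge> 0" and K: "K > 0"
    and VK: "AE x in lebesgue. x \<in> D \<longrightarrow>
               V x - (1 + K) / 4 * \<Omega>\<^sup>2 * ((x \<bullet> e1)\<^sup>2 + (x \<bullet> e2)\<^sup>2) \<ge> 0"
    and uH: "in_H10 D u" and un: "l2_norm D u = 1"
    and qH: "in_H10 D q"
    and q_eq: "\<forall>w. in_H10 D w \<longrightarrow> A_form D e1 e2 V \<beta> \<Omega> u q w = l2_inner D u w"
  shows "l2_inner D u q \<noteq> 0"
proof
  assume c0: "l2_inner D u q = 0"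
  define M where "M = lebesgue_on D"
  have Dm: "D \<in> sets lebesgue" using oD by (rule D_sets)
  have qL: "L2 M q" unfolding M_def using H10_L2[OF oD qH] .
  have uL: "L2 M u" unfolding M_def using H10_L2[OF oD uH] .
  define g where "g = wpd D q"
  have gL: "\<And>b. b \<in> Basis \<Longrightarrow> L2 M (g b)" unfolding M_def g_def using H10_wpd_L2[OF oD qH] .
  have Vm[measurable]: "V \<in> borel_measurable M" using V_meas by (simp add: smeas_on[OF Dm] M_def)
  have qm[measurable]: "q \<in> borel_measurable M" using qL by (rule L2_meas)
  have um[measurable]: "u \<in> borel_measurable M" using uL by (rule L2_meas)
  obtain Mv where Mv: "AE x in M. \<bar>V x\<bar> \<le> Mv" using V_bdd unfolding M_def by (auto simp: AE_on[OF Dm])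
  have V0: "AE x in M. V x \<ge> 0" using V_nonneg unfolding M_def by (simp add: AE_on[OF Dm])
  have VK': "AE x in M. V x - (1 + K) / 4 * \<Omega>\<^sup>2 * ((x \<bullet> e1)\<^sup>2 + (x \<bullet> e2)\<^sup>2) \<ge> 0"
    using VK unfolding M_def by (simp add: AE_on[OF Dm])
  have u1: "(\<integral>x. (cmod (u x))\<^sup>2 \<partial>M) = 1" using un by (simp add: l2n_on[OF oD] M_def)
  have VqI: "integrable M (\<lambda>x. V x * (cmod (q x))\<^sup>2)"
  proof (rule Bochner_Integration.integrable_bound[of _ "\<lambda>x. Mv * (cmod (q x))\<^sup>2"])
    show "integrable M (\<lambda>x. Mv * (cmod (q x))\<^sup>2)" using L2_int[OF qL] by simp
    show "(\<lambda>x. V x * (cmod (q x))\<^sup>2) \<in> borel_measurable M" by measurable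
    show "AE x in M. norm (V x * (cmod (q x))\<^sup>2) \<le> norm (Mv * (cmod (q x))\<^sup>2)"
    proof (rule AE_mp[OF Mv], intro AE_I2 impI)
      fix x assume "\<bar>V x\<bar> \<le> Mv"
      then have "\<bar>V x\<bar> \<le> \<bar>Mv\<bar>" by linarith
      then show "norm (V x * (cmod (q x))\<^sup>2) \<le> norm (Mv * (cmod (q x))\<^sup>2)"
        by (simp add: abs_mult mult_right_mono)
    qed
  qed
  define H where "H = (\<lambda>x. \<Sum>b\<in>Basis. (cmod (g b x))\<^sup>2)"
  have HI: "integrable M H" unfolding H_def using gL by (intro Bochner_Integration.integrable_sum) (auto intro: L2_int)
  define G where "G = (\<Sum>b\<in>Basis. (\<integral>x. (cmod (g b x))\<^sup>2 \<partial>M))"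
  have HG: "(\<integral>x. H x \<partial>M) = G" unfolding H_def G_def using gL by (intro Bochner_Integration.integral_sum) (auto intro: L2_int)
  have t1: "(\<Sum>b\<in>Basis. l2_inner D (wpd D q b) (wpd D q b)) = G"
    unfolding G_def g_def by (simp add: l2i_on[OF oD] sq_int M_def)
  have t2: "l2_inner D (\<lambda>x. complex_of_real (V x) * q x) q = (\<integral>x. V x * (cmod (q x))\<^sup>2 \<partial>M)"
  proof -
    have "(\<lambda>x. complex_of_real (V x) * q x * cnj (q x)) = (\<lambda>x. complex_of_real (V x * (cmod (q x))\<^sup>2))"
      by (simp only: mult.assoc complex_norm_square of_real_mult)
    then show ?thesis unfolding l2i_on[OF oD] M_def by (simp only: integral_complex_of_real Re_complex_of_real)
  qed
  have t4: "l2_inner D (\<lambda>x. complex_of_real ((cmod (u x))\<^sup>2) * q x) q = (\<integral>x. (cmod (u x))\<^sup>2 * (cmod (q x))\<^sup>2 \<partial>M)"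
  proof -
    have "(\<lambda>x. complex_of_real ((cmod (u x))\<^sup>2) * q x * cnj (q x)) = (\<lambda>x. complex_of_real ((cmod (u x))\<^sup>2 * (cmod (q x))\<^sup>2))"
      by (simp only: mult.assoc complex_norm_square of_real_mult)
    then show ?thesis unfolding l2i_on[OF oD] M_def by (simp only: integral_complex_of_real Re_complex_of_real)
  qed
  have t4p: "0 \<le> (\<integral>x. (cmod (u x))\<^sup>2 * (cmod (q x))\<^sup>2 \<partial>M)" by (intro integral_nonneg_AE) auto
  have t3: "\<Omega> * l2_inner D (L3 D e1 e2 q) q \<le> (\<integral>x. V x * (cmod (q x))\<^sup>2 \<partial>M) + G / (1 + K)"
  proof -
    define z where "z = (\<integral>x. L3 D e1 e2 q x * cnj (q x) \<partial>M)"
    have "\<Omega> * l2_inner D (L3 D e1 e2 q) q = \<Omega> * Re z" by (simp add: l2i_on[OF oD] M_def z_def)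
    also have "\<dots> \<le> \<bar>\<Omega>\<bar> * cmod z"
    proof -
      have "\<Omega> * Re z \<le> \<bar>\<Omega>\<bar> * \<bar>Re z\<bar>" by (metis abs_ge_self abs_mult)
      also have "\<dots> \<le> \<bar>\<Omega>\<bar> * cmod z" by (intro mult_left_mono abs_Re_le_cmod) simp
      finally show ?thesis .
    qed
    also have "cmod z \<le> (\<integral>x. cmod (L3 D e1 e2 q x) * cmod (q x) \<partial>M)"
      unfolding z_def using integral_norm_bound[of M "\<lambda>x. L3 D e1 e2 q x * cnj (q x)"] by (simp add: norm_mult)
    then have "\<bar>\<Omega>\<bar> * cmod z \<le> \<bar>\<Omega>\<bar> * (\<integral>x. cmod (L3 D e1 e2 q x) * cmod (q x) \<partial>M)"
      by (intro mult_left_mono) auto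
    also have "\<dots> = (\<integral>x. \<bar>\<Omega>\<bar> * cmod (L3 D e1 e2 q x) * cmod (q x) \<partial>M)"
      by (simp add: mult.assoc)
    also have "\<dots> \<le> (\<integral>x. V x * (cmod (q x))\<^sup>2 + H x / (1 + K) \<partial>M)"
    proof (rule integral_mono_AE')
      show "integrable M (\<lambda>x. V x * (cmod (q x))\<^sup>2 + H x / (1 + K))" using VqI HI by auto
      show "AE x in M. 0 \<le> V x * (cmod (q x))\<^sup>2 + H x / (1 + K)"
      proof (rule AE_mp[OF V0], intro AE_I2 impI)
        fix x assume "0 \<le> V x"
        then show "0 \<le> V x * (cmod (q x))\<^sup>2 + H x / (1 + K)"
          using K by (auto intro!: add_nonneg_nonneg divide_nonneg_nonneg sum_nonneg simp: H_def)
      qed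
      show "AE x in M. \<bar>\<Omega>\<bar> * cmod (L3 D e1 e2 q x) * cmod (q x) \<le> V x * (cmod (q x))\<^sup>2 + H x / (1 + K)"
      proof (rule AE_mp[OF VK'], intro AE_I2 impI)
        fix x assume vx: "V x - (1 + K) / 4 * \<Omega>\<^sup>2 * ((x \<bullet> e1)\<^sup>2 + (x \<bullet> e2)\<^sup>2) \<ge> 0"
        have "(\<Sum>b\<in>{e1, e2}. (cmod (g b x))\<^sup>2) \<le> H x"
          unfolding H_def using e12 by (intro sum_mono2) auto
        then have Hx: "(cmod (g e1 x))\<^sup>2 + (cmod (g e2 x))\<^sup>2 \<le> H x" using e12 by simp
        show "\<bar>\<Omega>\<bar> * cmod (L3 D e1 e2 q x) * cmod (q x) \<le> V x * (cmod (q x))\<^sup>2 + H x / (1 + K)"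
        proof -
          have "\<bar>\<Omega>\<bar> * cmod (- \<i> * (complex_of_real (x \<bullet> e1) * g e2 x - complex_of_real (x \<bullet> e2) * g e1 x)) * cmod (q x)
             \<le> V x * (cmod (q x))\<^sup>2 + H x / (1 + K)"
            by (rule pw_bound[OF K _ Hx]) (use vx in simp)
          then show ?thesis unfolding L3_def g_def[symmetric] .
        qed
      qed
    qed
    also have "\<dots> = (\<integral>x. V x * (cmod (q x))\<^sup>2 \<partial>M) + G / (1 + K)"
      using VqI HI HG by simp
    finally show ?thesis .
  qed
  have "0 = A_form D e1 e2 V \<beta> \<Omega> u q q" using q_eq qH c0 by simp
  also have "\<dots> = G + (\<integral>x. V x * (cmod (q x))\<^sup>2 \<partial>M) - \<Omega> * l2_inner D (L3 D e1 e2 q) q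
      + \<beta> * (\<integral>x. (cmod (u x))\<^sup>2 * (cmod (q x))\<^sup>2 \<partial>M)"
    unfolding A_form_def t1 t2 t4 ..
  also have "\<dots> \<ge> G - G / (1 + K)"
    using t3 t4p \<beta> by (smt (verit) mult_nonneg_nonneg)
  finally have "G - G / (1 + K) \<le> 0" .
  then have "G * K / (1 + K) \<le> 0" using K by (simp add: field_simps)
  then have G0: "G \<le> 0" using K by (simp add: divide_le_0_iff mult_le_0_iff)
  have nn: "\<And>b. b \<in> Basis \<Longrightarrow> 0 \<le> (\<integral>x. (cmod (g b x))\<^sup>2 \<partial>M)" by (intro integral_nonneg_AE) auto
  then have "G = 0" using G0 unfolding G_def by (smt (verit) sum_nonneg)
  then have "\<forall>b\<in>Basis. (\<integral>x. (cmod (g b x))\<^sup>2 \<partial>M) = 0"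
    unfolding G_def using nn by (subst (asm) sum_nonneg_eq_0_iff) auto
  then have gz: "\<And>b. b \<in> Basis \<Longrightarrow> AE x in M. g b x = 0"
    using integral_nonneg_eq_0_iff_AE[OF L2_int[OF gL]] by auto
  have gz1: "AE x in lebesgue_on D. wpd D q e1 x = 0" using gz[OF e12(1)] unfolding M_def g_def .
  have qz: "AE x in M. q x = 0"
    unfolding M_def by (rule poinc[OF oD bD e12(1) qH gz1])
  have "A_form D e1 e2 V \<beta> \<Omega> u q u = 0"
  proof -
    have s1: "(\<Sum>b\<in>Basis. l2_inner D (wpd D q b) (wpd D u b)) = 0"
    proof (intro sum.neutral ballI)
      fix b :: 'a assume b: "b \<in> Basis"
      show "l2_inner D (wpd D q b) (wpd D u b) = 0"
        unfolding l2i_on[OF oD] M_def[symmetric] using gz[OF b]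
        by (subst integral_eq_zero_AE) (auto elim!: AE_mp simp: g_def)
    qed
    have s2: "l2_inner D (\<lambda>x. complex_of_real (V x) * q x) u = 0"
      unfolding l2i_on[OF oD] M_def[symmetric] using qz
      by (subst integral_eq_zero_AE) (auto elim!: AE_mp)
    have s3: "l2_inner D (L3 D e1 e2 q) u = 0"
      unfolding l2i_on[OF oD] M_def[symmetric] L3_def g_def[symmetric] using gz[OF e12(1)] gz[OF e12(2)]
      by (subst integral_eq_zero_AE) (auto elim!: AE_mp)
    have s4: "l2_inner D (\<lambda>x. complex_of_real ((cmod (u x))\<^sup>2) * q x) u = 0"
      unfolding l2i_on[OF oD] M_def[symmetric] using qz
      by (subst integral_eq_zero_AE) (auto elim!: AE_mp)
    show ?thesis unfolding A_form_def s1 s2 s3 s4 by simp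
  qed
  moreover have "l2_inner D u u = 1"
    using u1 by (simp add: l2i_on[OF oD] sq_int M_def)
  ultimately show False using q_eq uH by simp
qed

lemma cmod_diff_sq: "(cmod (a - b))\<^sup>2 = (cmod a)\<^sup>2 - 2 * Re (a * cnj b) + (cmod b)\<^sup>2"
  unfolding cmod_power2 by (simp add: power2_eq_square algebra_simps)

theorem lemma4p1:
  fixes D :: "'a::euclidean_space set" and V :: "'a \<Rightarrow> real"
    and \<beta> \<Omega> K \<tau> :: real and e1 e2 :: 'a
    and u q uhat unew :: "'a \<Rightarrow> complex" and \<gamma> :: real
  assumes dim: "DIM('a) \<in> {2, 3}"
    and e12: "e1 \<in> Basis" "e2 \<in> Basis" "e1 \<noteq> e2"
    and dom: "open D" "connected D" "D \<noteq> {}" "bounded D" "convex D"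
    and V_meas: "set_borel_measurable lebesgue D V"
    and V_bdd: "\<exists>M. AE x in lebesgue. x \<in> D \<longrightarrow> \<bar>V x\<bar> \<le> M"
    and V_nonneg: "AE x in lebesgue. x \<in> D \<longrightarrow> V x \<ge> 0"
    and \<beta>: "\<beta> \<ge> 0"
    and K: "K > 0"
    and VK: "AE x in lebesgue. x \<in> D \<longrightarrow>
               V x - (1 + K) / 4 * \<Omega>\<^sup>2 * ((x \<bullet> e1)\<^sup>2 + (x \<bullet> e2)\<^sup>2) \<ge> 0"
    and u_S: "in_H10 D u" "l2_norm D u = 1"
    and q_H10: "in_H10 D q"
    and q_eq: "\<forall>w. in_H10 D w \<longrightarrow> A_form D e1 e2 V \<beta> \<Omega> u q w = l2_inner D u w"
    and \<tau>: "\<tau> > 0"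
    and \<gamma>_def: "\<gamma> = inverse (l2_inner D u q)"
    and uhat_def: "uhat = (\<lambda>x. complex_of_real (1 - \<tau>) * u x + complex_of_real (\<tau> * \<gamma>) * q x)"
    and unew_def: "unew = (\<lambda>x. uhat x / complex_of_real (l2_norm D uhat))"
  shows "l2_norm D uhat - l2_norm D u
           = l2_inner D (\<lambda>x. u x - unew x) u / l2_inner D unew u
       \<and> l2_inner D (\<lambda>x. u x - unew x) u / l2_inner D unew u \<ge> 0
       \<and> (l2_norm D uhat = l2_norm D u \<longleftrightarrow> (AE x in lebesgue. x \<in> D \<longrightarrow> u x = uhat x))"
proof -
  have oD: "open D" and bD: "bounded D" using dom by auto
  define M where "M = lebesgue_on D"
  have Dm: "D \<in> sets lebesgue" using oD by (rule D_sets)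
  have qL: "L2 M q" unfolding M_def using H10_L2[OF oD q_H10] .
  have uL: "L2 M u" unfolding M_def using H10_L2[OF oD u_S(1)] .
  define c where "c = l2_inner D u q"
  have c0: "c \<noteq> 0" unfolding c_def
    by (rule key_nonzero[OF e12 oD bD V_meas V_bdd V_nonneg \<beta> K VK u_S q_H10 q_eq])
  have u1: "(\<integral>x. (cmod (u x))\<^sup>2 \<partial>M) = 1" using u_S(2) by (simp add: l2n_on[OF oD] M_def)
  have hL: "L2 M uhat" unfolding uhat_def using uL qL by (intro L2_add L2_cmult)
  have iuu: "(\<integral>x. u x * cnj (u x) \<partial>M) = 1" using u1 by (simp add: sq_int)
  have iqu: "Re (\<integral>x. q x * cnj (u x) \<partial>M) = c"
  proof -
    have "(\<integral>x. q x * cnj (u x) \<partial>M) = (\<integral>x. cnj (u x * cnj (q x)) \<partial>M)" by (simp add: mult.commute)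
    also have "\<dots> = cnj (\<integral>x. u x * cnj (q x) \<partial>M)" by (rule Bochner_Integration.integral_cnj)
    finally show ?thesis by (simp add: c_def l2i_on[OF oD] M_def)
  qed
  have Iuu: "integrable M (\<lambda>x. u x * cnj (u x))" by (rule L2_prod_int_c[OF uL uL])
  have Iqu: "integrable M (\<lambda>x. q x * cnj (u x))" using qL uL by (rule L2_prod_int_c)
  have Ihu: "integrable M (\<lambda>x. uhat x * cnj (u x))" using hL uL by (rule L2_prod_int_c)
  define P where "P = Re (\<integral>x. uhat x * cnj (u x) \<partial>M)"
  have P1: "P = 1"
  proof -
    have "(\<integral>x. uhat x * cnj (u x) \<partial>M)
        = (\<integral>x. complex_of_real (1 - \<tau>) * (u x * cnj (u x)) + complex_of_real (\<tau> * \<gamma>) * (q x * cnj (u x)) \<partial>M)"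
      unfolding uhat_def by (simp add: algebra_simps)
    also have "\<dots> = complex_of_real (1 - \<tau>) * (\<integral>x. u x * cnj (u x) \<partial>M) + complex_of_real (\<tau> * \<gamma>) * (\<integral>x. q x * cnj (u x) \<partial>M)"
      using Iuu Iqu by simp
    finally have "P = (1 - \<tau>) + \<tau> * \<gamma> * c" unfolding P_def using iuu iqu by simp
    also have "\<dots> = 1" using c0 by (simp add: \<gamma>_def c_def[symmetric])
    finally show ?thesis .
  qed
  define N where "N = l2_norm D uhat"
  have N0: "0 \<le> N" unfolding N_def l2n_on[OF oD] by (intro real_sqrt_ge_zero integral_nonneg_AE) auto
  have NN: "N\<^sup>2 = (\<integral>x. (cmod (uhat x))\<^sup>2 \<partial>M)"
    unfolding N_def l2n_on[OF oD] M_def by (simp add: integral_nonneg_AE)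
  have dL: "L2 M (\<lambda>x. uhat x - u x)" using hL uL by (rule L2_diff)
  define E where "E = (\<integral>x. (cmod (uhat x - u x))\<^sup>2 \<partial>M)"
  have EN: "E = N\<^sup>2 - 1"
  proof -
    have "E = (\<integral>x. (cmod (uhat x))\<^sup>2 - 2 * Re (uhat x * cnj (u x)) + (cmod (u x))\<^sup>2 \<partial>M)"
      unfolding E_def by (simp only: cmod_diff_sq)
    also have "\<dots> = (\<integral>x. (cmod (uhat x))\<^sup>2 \<partial>M) - 2 * P + (\<integral>x. (cmod (u x))\<^sup>2 \<partial>M)"
    proof -
      have r: "(\<integral>x. Re (uhat x * cnj (u x)) \<partial>M) = P" unfolding P_def by (rule integral_Re[OF Ihu])
      have i1: "integrable M (\<lambda>x. (cmod (uhat x))\<^sup>2 - 2 * Re (uhat x * cnj (u x)))"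
        using L2_int[OF hL] integrable_Re[OF Ihu] by (intro Bochner_Integration.integrable_diff integrable_mult_right)
      have "(\<integral>x. (cmod (uhat x))\<^sup>2 - 2 * Re (uhat x * cnj (u x)) + (cmod (u x))\<^sup>2 \<partial>M)
          = (\<integral>x. (cmod (uhat x))\<^sup>2 - 2 * Re (uhat x * cnj (u x)) \<partial>M) + (\<integral>x. (cmod (u x))\<^sup>2 \<partial>M)"
        by (rule Bochner_Integration.integral_add[OF i1 L2_int[OF uL]])
      also have "(\<integral>x. (cmod (uhat x))\<^sup>2 - 2 * Re (uhat x * cnj (u x)) \<partial>M)
          = (\<integral>x. (cmod (uhat x))\<^sup>2 \<partial>M) - (\<integral>x. 2 * Re (uhat x * cnj (u x)) \<partial>M)"
        by (rule Bochner_Integration.integral_diff[OF L2_int[OF hL] integrable_mult_right[OF integrable_Re[OF Ihu]]])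
      also have "(\<integral>x. 2 * Re (uhat x * cnj (u x)) \<partial>M) = 2 * P"
        using r by (simp only: integral_mult_right_zero)
      finally show ?thesis .
    qed
    finally show ?thesis using NN u1 P1 by simp
  qed
  have E0: "0 \<le> E" unfolding E_def by (intro integral_nonneg_AE) auto
  have N1: "N \<ge> 1"
  proof -
    have "1 \<le> N\<^sup>2" using EN E0 by simp
    then show ?thesis using N0 power2_le_imp_le[of 1 N] by simp
  qed
  have Npos: "N > 0" using N1 by simp
  have in1: "l2_inner D (\<lambda>x. u x - unew x) u = 1 - 1 / N"
  proof -
    have "(\<integral>x. (u x - unew x) * cnj (u x) \<partial>M)
        = (\<integral>x. u x * cnj (u x) - complex_of_real (1 / N) * (uhat x * cnj (u x)) \<partial>M)"
      unfolding unew_def N_def[symmetric] by (intro Bochner_Integration.integral_cong) (auto simp: field_simps)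
    also have "\<dots> = (\<integral>x. u x * cnj (u x) \<partial>M) - complex_of_real (1 / N) * (\<integral>x. uhat x * cnj (u x) \<partial>M)"
      using Iuu Ihu by simp
    finally have "Re (\<integral>x. (u x - unew x) * cnj (u x) \<partial>M) = 1 - 1 / N * P"
      using iuu by (simp add: P_def)
    then show ?thesis using P1 by (simp add: l2i_on[OF oD] M_def)
  qed
  have in2: "l2_inner D unew u = 1 / N"
  proof -
    have "(\<integral>x. unew x * cnj (u x) \<partial>M) = (\<integral>x. complex_of_real (1 / N) * (uhat x * cnj (u x)) \<partial>M)"
      unfolding unew_def N_def[symmetric] by (intro Bochner_Integration.integral_cong) (auto simp: field_simps)
    also have "\<dots> = complex_of_real (1 / N) * (\<integral>x. uhat x * cnj (u x) \<partial>M)" by simp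
    finally have "Re (\<integral>x. unew x * cnj (u x) \<partial>M) = 1 / N * P" by (simp add: P_def)
    then show ?thesis using P1 by (simp add: l2i_on[OF oD] M_def)
  qed
  have ratio: "l2_inner D (\<lambda>x. u x - unew x) u / l2_inner D unew u = N - 1"
    unfolding in1 in2 using Npos by (simp add: field_simps)
  have iff: "N = 1 \<longleftrightarrow> (AE x in lebesgue. x \<in> D \<longrightarrow> u x = uhat x)"
  proof -
    have "N = 1 \<longleftrightarrow> E = 0" using EN N0 by (smt (verit) power2_eq_1_iff)
    also have "\<dots> \<longleftrightarrow> (AE x in M. (cmod (uhat x - u x))\<^sup>2 = 0)"
      unfolding E_def using integral_nonneg_eq_0_iff_AE[OF L2_int[OF dL]] by simp
    also have "\<dots> \<longleftrightarrow> (AE x in M. u x = uhat x)" by (intro AE_cong) auto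
    also have "\<dots> \<longleftrightarrow> (AE x in lebesgue. x \<in> D \<longrightarrow> u x = uhat x)"
      unfolding M_def by (simp add: AE_on[OF Dm])
    finally show ?thesis .
  qed
  show ?thesis
    using ratio N1 iff u_S(2) by (simp add: N_def)
qed

end
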